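(* For all integers $n_1,n_2\ge1$ there are polynomials $q_{n_1,n_2}$ (in three variables) and $r_{n_1,n_2}$ (in four variables), all of whose terms have degree exactly $n_1+n_2-2$, such that for all real $a,b,c,d$, $$a^{n_1}c^{n_2}+b^{n_1}d^{n_2}-2\left(\frac{a+b}{2}\right)^{n_1}\left(\frac{c+d}{2}\right)^{n_2}=(a-b)^2q_{n_1,n_2}(a,b,d)+(c-d)^2q_{n_2,n_1}(c,d,b)+(a-b)(c-d)\,r_{n_1,n_2}(a,b,c,d).$$ Moreover, for $n_1=n_2=1$, $q_{1,1}(a,b,d)=0$ and $r_{1,1}(a,b,c,d)=\tfrac12$. *)

theory Defs
  imports Complex_Main
begin

definition hpoly3 :: "nat \<Rightarrow> (nat \<Rightarrow> nat \<Rightarrow> nat \<Rightarrow> real) \<Rightarrow> real \<Rightarrow> real \<Rightarrow> real \<Rightarrow> real" where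
  "hpoly3 N c x y z =
     (\<Sum>(i,j,k) \<in> {(i,j,k). i + j + k = N}. c i j k * x ^ i * y ^ j * z ^ k)"

definition hpoly4 :: "nat \<Rightarrow> (nat \<Rightarrow> nat \<Rightarrow> nat \<Rightarrow> nat \<Rightarrow> real) \<Rightarrow> real \<Rightarrow> real \<Rightarrow> real \<Rightarrow> real \<Rightarrow> real" where
  "hpoly4 N c x y z w =
     (\<Sum>(i,j,k,l) \<in> {(i,j,k,l). i + j + k + l = N}. c i j k l * x ^ i * y ^ j * z ^ k * w ^ l)"

end

theory Submission
  imports Defs
begin


definition S4 :: "nat \<Rightarrow> (nat\<times>nat\<times>nat\<times>nat) set" where
 "S4 N = {(i,j,k,l). i + j + k + l = N}"

lemma S4_fin: "finite (S4 N)"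
proof -
  have "S4 N \<subseteq> {..N} \<times> {..N} \<times> {..N} \<times> {..N}" unfolding S4_def by auto
  thus ?thesis by (rule finite_subset) auto
qed

lemma hpoly4_S: "hpoly4 N c x y z w = (\<Sum>(i,j,k,l) \<in> S4 N. c i j k l * x ^ i * y ^ j * z ^ k * w ^ l)"
  unfolding hpoly4_def S4_def by simp

lemma hpoly4_add: "hpoly4 N (\<lambda>i j k l. c i j k l + e i j k l) x y z w = hpoly4 N c x y z w + hpoly4 N e x y z w"
  unfolding hpoly4_S by (simp add: sum.distrib[symmetric] split_def algebra_simps)

lemma hpoly4_0: "hpoly4 0 (\<lambda>i j k l. r) x y z w = r"
proof -
  have "S4 0 = {(0,0,0,0)}" unfolding S4_def by auto
  thus ?thesis unfolding hpoly4_S by simp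
qed

definition S3 :: "nat \<Rightarrow> (nat\<times>nat\<times>nat) set" where
 "S3 N = {(i,j,k). i + j + k = N}"

lemma S3_fin: "finite (S3 N)"
proof -
  have "S3 N \<subseteq> {..N} \<times> {..N} \<times> {..N}" unfolding S3_def by auto
  thus ?thesis by (rule finite_subset) auto
qed

lemma hpoly3_S: "hpoly3 N c x y z = (\<Sum>(i,j,k) \<in> S3 N. c i j k * x ^ i * y ^ j * z ^ k)"
  unfolding hpoly3_def S3_def by simp

lemma hpoly3_add: "hpoly3 N (\<lambda>i j k. c i j k + e i j k) x y z = hpoly3 N c x y z + hpoly3 N e x y z"
  unfolding hpoly3_S by (simp add: sum.distrib[symmetric] split_def algebra_simps)

lemma hpoly3_0: "hpoly3 0 (\<lambda>i j k. r) x y z = r"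
proof -
  have "S3 0 = {(0,0,0)}" unfolding S3_def by auto
  thus ?thesis unfolding hpoly3_S by simp
qed

lemma hpoly4_x: "hpoly4 (Suc N) (\<lambda>i j k l. if i = 0 then 0 else c (i - 1) j k l) x y z w = x * hpoly4 N c x y z w"
proof -
  let ?g = "\<lambda>(i::nat,j::nat,k::nat,l::nat). (Suc i, j, k, l)"
  let ?c = "\<lambda>i j k l. if i = 0 then 0 else c (i - 1) j k l"
  have inj: "inj_on ?g (S4 N)" by (auto simp: inj_on_def)
  have sub: "?g ` S4 N \<subseteq> S4 (Suc N)" unfolding S4_def by auto
  have z: "\<forall>p \<in> S4 (Suc N) - ?g ` S4 N. (case p of (i,j,k,l) \<Rightarrow> ?c i j k l * x ^ i * y ^ j * z ^ k * w ^ l) = 0"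
  proof
    fix p assume p: "p \<in> S4 (Suc N) - ?g ` S4 N"
    obtain i j k l where pe: "p = (i,j,k,l)" by (cases p) auto
    have "i = 0"
    proof (rule ccontr)
      assume "i \<noteq> 0" then obtain i' where "i = Suc i'" by (cases i) auto
      with p pe show False unfolding S4_def by (auto simp: image_iff)
    qed
    thus "(case p of (i,j,k,l) \<Rightarrow> ?c i j k l * x ^ i * y ^ j * z ^ k * w ^ l) = 0" using pe by simp
  qed
  have "hpoly4 (Suc N) ?c x y z w = (\<Sum>p \<in> ?g ` S4 N. (case p of (i,j,k,l) \<Rightarrow> ?c i j k l * x ^ i * y ^ j * z ^ k * w ^ l))"
    unfolding hpoly4_S by (rule sum.mono_neutral_right[OF S4_fin sub z])
  also have "\<dots> = (\<Sum>p \<in> S4 N. (case ?g p of (i,j,k,l) \<Rightarrow> ?c i j k l * x ^ i * y ^ j * z ^ k * w ^ l))"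
    by (rule sum.reindex[OF inj, unfolded comp_def])
  also have "\<dots> = x * hpoly4 N c x y z w"
    unfolding hpoly4_S sum_distrib_left by (rule sum.cong) (auto simp: algebra_simps)
  finally show ?thesis .
qed

lemma hpoly4_y: "hpoly4 (Suc N) (\<lambda>i j k l. if j = 0 then 0 else c i (j - 1) k l) x y z w = y * hpoly4 N c x y z w"
proof -
  let ?g = "\<lambda>(i::nat,j::nat,k::nat,l::nat). (i, Suc j, k, l)"
  let ?c = "\<lambda>i j k l. if j = 0 then 0 else c i (j - 1) k l"
  have inj: "inj_on ?g (S4 N)" by (auto simp: inj_on_def)
  have sub: "?g ` S4 N \<subseteq> S4 (Suc N)" unfolding S4_def by auto
  have z: "\<forall>p \<in> S4 (Suc N) - ?g ` S4 N. (case p of (i,j,k,l) \<Rightarrow> ?c i j k l * x ^ i * y ^ j * z ^ k * w ^ l) = 0"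
  proof
    fix p assume p: "p \<in> S4 (Suc N) - ?g ` S4 N"
    obtain i j k l where pe: "p = (i,j,k,l)" by (cases p) auto
    have "j = 0"
    proof (rule ccontr)
      assume "j \<noteq> 0" then obtain i' where "j = Suc i'" by (cases j) auto
      with p pe show False unfolding S4_def by (auto simp: image_iff)
    qed
    thus "(case p of (i,j,k,l) \<Rightarrow> ?c i j k l * x ^ i * y ^ j * z ^ k * w ^ l) = 0" using pe by simp
  qed
  have "hpoly4 (Suc N) ?c x y z w = (\<Sum>p \<in> ?g ` S4 N. (case p of (i,j,k,l) \<Rightarrow> ?c i j k l * x ^ i * y ^ j * z ^ k * w ^ l))"
    unfolding hpoly4_S by (rule sum.mono_neutral_right[OF S4_fin sub z])
  also have "\<dots> = (\<Sum>p \<in> S4 N. (case ?g p of (i,j,k,l) \<Rightarrow> ?c i j k l * x ^ i * y ^ j * z ^ k * w ^ l))"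
    by (rule sum.reindex[OF inj, unfolded comp_def])
  also have "\<dots> = y * hpoly4 N c x y z w"
    unfolding hpoly4_S sum_distrib_left by (rule sum.cong) (auto simp: algebra_simps)
  finally show ?thesis .
qed

lemma hpoly4_z: "hpoly4 (Suc N) (\<lambda>i j k l. if k = 0 then 0 else c i j (k - 1) l) x y z w = z * hpoly4 N c x y z w"
proof -
  let ?g = "\<lambda>(i::nat,j::nat,k::nat,l::nat). (i, j, Suc k, l)"
  let ?c = "\<lambda>i j k l. if k = 0 then 0 else c i j (k - 1) l"
  have inj: "inj_on ?g (S4 N)" by (auto simp: inj_on_def)
  have sub: "?g ` S4 N \<subseteq> S4 (Suc N)" unfolding S4_def by auto
  have z: "\<forall>p \<in> S4 (Suc N) - ?g ` S4 N. (case p of (i,j,k,l) \<Rightarrow> ?c i j k l * x ^ i * y ^ j * z ^ k * w ^ l) = 0"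
  proof
    fix p assume p: "p \<in> S4 (Suc N) - ?g ` S4 N"
    obtain i j k l where pe: "p = (i,j,k,l)" by (cases p) auto
    have "k = 0"
    proof (rule ccontr)
      assume "k \<noteq> 0" then obtain i' where "k = Suc i'" by (cases k) auto
      with p pe show False unfolding S4_def by (auto simp: image_iff)
    qed
    thus "(case p of (i,j,k,l) \<Rightarrow> ?c i j k l * x ^ i * y ^ j * z ^ k * w ^ l) = 0" using pe by simp
  qed
  have "hpoly4 (Suc N) ?c x y z w = (\<Sum>p \<in> ?g ` S4 N. (case p of (i,j,k,l) \<Rightarrow> ?c i j k l * x ^ i * y ^ j * z ^ k * w ^ l))"
    unfolding hpoly4_S by (rule sum.mono_neutral_right[OF S4_fin sub z])
  also have "\<dots> = (\<Sum>p \<in> S4 N. (case ?g p of (i,j,k,l) \<Rightarrow> ?c i j k l * x ^ i * y ^ j * z ^ k * w ^ l))"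
    by (rule sum.reindex[OF inj, unfolded comp_def])
  also have "\<dots> = z * hpoly4 N c x y z w"
    unfolding hpoly4_S sum_distrib_left by (rule sum.cong) (auto simp: algebra_simps)
  finally show ?thesis .
qed

lemma hpoly4_w: "hpoly4 (Suc N) (\<lambda>i j k l. if l = 0 then 0 else c i j k (l - 1)) x y z w = w * hpoly4 N c x y z w"
proof -
  let ?g = "\<lambda>(i::nat,j::nat,k::nat,l::nat). (i, j, k, Suc l)"
  let ?c = "\<lambda>i j k l. if l = 0 then 0 else c i j k (l - 1)"
  have inj: "inj_on ?g (S4 N)" by (auto simp: inj_on_def)
  have sub: "?g ` S4 N \<subseteq> S4 (Suc N)" unfolding S4_def by auto
  have z: "\<forall>p \<in> S4 (Suc N) - ?g ` S4 N. (case p of (i,j,k,l) \<Rightarrow> ?c i j k l * x ^ i * y ^ j * z ^ k * w ^ l) = 0"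
  proof
    fix p assume p: "p \<in> S4 (Suc N) - ?g ` S4 N"
    obtain i j k l where pe: "p = (i,j,k,l)" by (cases p) auto
    have "l = 0"
    proof (rule ccontr)
      assume "l \<noteq> 0" then obtain i' where "l = Suc i'" by (cases l) auto
      with p pe show False unfolding S4_def by (auto simp: image_iff)
    qed
    thus "(case p of (i,j,k,l) \<Rightarrow> ?c i j k l * x ^ i * y ^ j * z ^ k * w ^ l) = 0" using pe by simp
  qed
  have "hpoly4 (Suc N) ?c x y z w = (\<Sum>p \<in> ?g ` S4 N. (case p of (i,j,k,l) \<Rightarrow> ?c i j k l * x ^ i * y ^ j * z ^ k * w ^ l))"
    unfolding hpoly4_S by (rule sum.mono_neutral_right[OF S4_fin sub z])
  also have "\<dots> = (\<Sum>p \<in> S4 N. (case ?g p of (i,j,k,l) \<Rightarrow> ?c i j k l * x ^ i * y ^ j * z ^ k * w ^ l))"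
    by (rule sum.reindex[OF inj, unfolded comp_def])
  also have "\<dots> = w * hpoly4 N c x y z w"
    unfolding hpoly4_S sum_distrib_left by (rule sum.cong) (auto simp: algebra_simps)
  finally show ?thesis .
qed

lemma hpoly3_x: "hpoly3 (Suc N) (\<lambda>i j k. if i = 0 then 0 else c (i - 1) j k) x y z = x * hpoly3 N c x y z"
proof -
  let ?g = "\<lambda>(i::nat,j::nat,k::nat). (Suc i, j, k)"
  let ?c = "\<lambda>i j k. if i = 0 then 0 else c (i - 1) j k"
  have inj: "inj_on ?g (S3 N)" by (auto simp: inj_on_def)
  have sub: "?g ` S3 N \<subseteq> S3 (Suc N)" unfolding S3_def by auto
  have z: "\<forall>p \<in> S3 (Suc N) - ?g ` S3 N. (case p of (i,j,k) \<Rightarrow> ?c i j k * x ^ i * y ^ j * z ^ k) = 0"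
  proof
    fix p assume p: "p \<in> S3 (Suc N) - ?g ` S3 N"
    obtain i j k where pe: "p = (i,j,k)" by (cases p) auto
    have "i = 0"
    proof (rule ccontr)
      assume "i \<noteq> 0" then obtain i' where "i = Suc i'" by (cases i) auto
      with p pe show False unfolding S3_def by (auto simp: image_iff)
    qed
    thus "(case p of (i,j,k) \<Rightarrow> ?c i j k * x ^ i * y ^ j * z ^ k) = 0" using pe by simp
  qed
  have "hpoly3 (Suc N) ?c x y z = (\<Sum>p \<in> ?g ` S3 N. (case p of (i,j,k) \<Rightarrow> ?c i j k * x ^ i * y ^ j * z ^ k))"
    unfolding hpoly3_S by (rule sum.mono_neutral_right[OF S3_fin sub z])
  also have "\<dots> = (\<Sum>p \<in> S3 N. (case ?g p of (i,j,k) \<Rightarrow> ?c i j k * x ^ i * y ^ j * z ^ k))"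
    by (rule sum.reindex[OF inj, unfolded comp_def])
  also have "\<dots> = x * hpoly3 N c x y z"
    unfolding hpoly3_S sum_distrib_left by (rule sum.cong) (auto simp: algebra_simps)
  finally show ?thesis .
qed

lemma hpoly3_y: "hpoly3 (Suc N) (\<lambda>i j k. if j = 0 then 0 else c i (j - 1) k) x y z = y * hpoly3 N c x y z"
proof -
  let ?g = "\<lambda>(i::nat,j::nat,k::nat). (i, Suc j, k)"
  let ?c = "\<lambda>i j k. if j = 0 then 0 else c i (j - 1) k"
  have inj: "inj_on ?g (S3 N)" by (auto simp: inj_on_def)
  have sub: "?g ` S3 N \<subseteq> S3 (Suc N)" unfolding S3_def by auto
  have z: "\<forall>p \<in> S3 (Suc N) - ?g ` S3 N. (case p of (i,j,k) \<Rightarrow> ?c i j k * x ^ i * y ^ j * z ^ k) = 0"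
  proof
    fix p assume p: "p \<in> S3 (Suc N) - ?g ` S3 N"
    obtain i j k where pe: "p = (i,j,k)" by (cases p) auto
    have "j = 0"
    proof (rule ccontr)
      assume "j \<noteq> 0" then obtain i' where "j = Suc i'" by (cases j) auto
      with p pe show False unfolding S3_def by (auto simp: image_iff)
    qed
    thus "(case p of (i,j,k) \<Rightarrow> ?c i j k * x ^ i * y ^ j * z ^ k) = 0" using pe by simp
  qed
  have "hpoly3 (Suc N) ?c x y z = (\<Sum>p \<in> ?g ` S3 N. (case p of (i,j,k) \<Rightarrow> ?c i j k * x ^ i * y ^ j * z ^ k))"
    unfolding hpoly3_S by (rule sum.mono_neutral_right[OF S3_fin sub z])
  also have "\<dots> = (\<Sum>p \<in> S3 N. (case ?g p of (i,j,k) \<Rightarrow> ?c i j k * x ^ i * y ^ j * z ^ k))"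
    by (rule sum.reindex[OF inj, unfolded comp_def])
  also have "\<dots> = y * hpoly3 N c x y z"
    unfolding hpoly3_S sum_distrib_left by (rule sum.cong) (auto simp: algebra_simps)
  finally show ?thesis .
qed

lemma hpoly3_z: "hpoly3 (Suc N) (\<lambda>i j k. if k = 0 then 0 else c i j (k - 1)) x y z = z * hpoly3 N c x y z"
proof -
  let ?g = "\<lambda>(i::nat,j::nat,k::nat). (i, j, Suc k)"
  let ?c = "\<lambda>i j k. if k = 0 then 0 else c i j (k - 1)"
  have inj: "inj_on ?g (S3 N)" by (auto simp: inj_on_def)
  have sub: "?g ` S3 N \<subseteq> S3 (Suc N)" unfolding S3_def by auto
  have z: "\<forall>p \<in> S3 (Suc N) - ?g ` S3 N. (case p of (i,j,k) \<Rightarrow> ?c i j k * x ^ i * y ^ j * z ^ k) = 0"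
  proof
    fix p assume p: "p \<in> S3 (Suc N) - ?g ` S3 N"
    obtain i j k where pe: "p = (i,j,k)" by (cases p) auto
    have "k = 0"
    proof (rule ccontr)
      assume "k \<noteq> 0" then obtain i' where "k = Suc i'" by (cases k) auto
      with p pe show False unfolding S3_def by (auto simp: image_iff)
    qed
    thus "(case p of (i,j,k) \<Rightarrow> ?c i j k * x ^ i * y ^ j * z ^ k) = 0" using pe by simp
  qed
  have "hpoly3 (Suc N) ?c x y z = (\<Sum>p \<in> ?g ` S3 N. (case p of (i,j,k) \<Rightarrow> ?c i j k * x ^ i * y ^ j * z ^ k))"
    unfolding hpoly3_S by (rule sum.mono_neutral_right[OF S3_fin sub z])
  also have "\<dots> = (\<Sum>p \<in> S3 N. (case ?g p of (i,j,k) \<Rightarrow> ?c i j k * x ^ i * y ^ j * z ^ k))"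
    by (rule sum.reindex[OF inj, unfolded comp_def])
  also have "\<dots> = z * hpoly3 N c x y z"
    unfolding hpoly3_S sum_distrib_left by (rule sum.cong) (auto simp: algebra_simps)
  finally show ?thesis .
qed




inductive H4 :: "nat \<Rightarrow> (real \<Rightarrow> real \<Rightarrow> real \<Rightarrow> real \<Rightarrow> real) \<Rightarrow> bool" where
  H4c: "H4 0 (\<lambda>a b c d. r)"
| H4add: "H4 n f \<Longrightarrow> H4 n g \<Longrightarrow> H4 n (\<lambda>a b c d. f a b c d + g a b c d)"
| H4a: "H4 n f \<Longrightarrow> H4 (Suc n) (\<lambda>a b c d. a * f a b c d)"
| H4b: "H4 n f \<Longrightarrow> H4 (Suc n) (\<lambda>a b c d. b * f a b c d)"
| H4cc: "H4 n f \<Longrightarrow> H4 (Suc n) (\<lambda>a b c d. c * f a b c d)"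
| H4d: "H4 n f \<Longrightarrow> H4 (Suc n) (\<lambda>a b c d. d * f a b c d)"

lemma H4_hpoly: "H4 n f \<Longrightarrow> \<exists>C. \<forall>a b c d. f a b c d = hpoly4 n C a b c d"
proof (induction rule: H4.induct)
  case (H4c r) then show ?case by (intro exI[of _ "\<lambda>i j k l. r"]) (simp add: hpoly4_0)
next
  case (H4add n f g) then obtain C1 C2 where "\<forall>a b c d. f a b c d = hpoly4 n C1 a b c d"
    "\<forall>a b c d. g a b c d = hpoly4 n C2 a b c d" by blast
  then show ?case by (intro exI[of _ "\<lambda>i j k l. C1 i j k l + C2 i j k l"]) (simp add: hpoly4_add)
next
  case (H4a n f) then obtain C where "\<forall>a b c d. f a b c d = hpoly4 n C a b c d" by blast
  then show ?case by (intro exI[of _ "\<lambda>i j k l. if i = 0 then 0 else C (i - 1) j k l"]) (simp add: hpoly4_x)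
next
  case (H4b n f) then obtain C where "\<forall>a b c d. f a b c d = hpoly4 n C a b c d" by blast
  then show ?case by (intro exI[of _ "\<lambda>i j k l. if j = 0 then 0 else C i (j - 1) k l"]) (simp add: hpoly4_y)
next
  case (H4cc n f) then obtain C where "\<forall>a b c d. f a b c d = hpoly4 n C a b c d" by blast
  then show ?case by (intro exI[of _ "\<lambda>i j k l. if k = 0 then 0 else C i j (k - 1) l"]) (simp add: hpoly4_z)
next
  case (H4d n f) then obtain C where "\<forall>a b c d. f a b c d = hpoly4 n C a b c d" by blast
  then show ?case by (intro exI[of _ "\<lambda>i j k l. if l = 0 then 0 else C i j k (l - 1)"]) (simp add: hpoly4_w)
qed

lemma H4_cong: "H4 n f \<Longrightarrow> (\<And>a b c d. f a b c d = g a b c d) \<Longrightarrow> H4 n g"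
proof -
  assume "H4 n f" "\<And>a b c d. f a b c d = g a b c d"
  moreover have "f = g" using calculation(2) by (intro ext) 
  ultimately show ?thesis by simp
qed

lemma H4_degeq: "H4 n f \<Longrightarrow> n = m \<Longrightarrow> H4 m f" by blast

lemma H4_scale: "H4 n f \<Longrightarrow> H4 n (\<lambda>a b c d. r * f a b c d)"
proof (induction rule: H4.induct)
  case (H4c r') then show ?case using H4.H4c[of "r*r'"] by simp
next
  case (H4add n f g) then show ?case using H4.H4add[OF H4add.IH] by (simp add: distrib_left)
next
  case (H4a n f) show ?case by (rule H4_cong[OF H4.H4a[OF H4a.IH]]) (simp add: algebra_simps)
next
  case (H4b n f) show ?case by (rule H4_cong[OF H4.H4b[OF H4b.IH]]) (simp add: algebra_simps)
next
  case (H4cc n f) show ?case by (rule H4_cong[OF H4.H4cc[OF H4cc.IH]]) (simp add: algebra_simps)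
next
  case (H4d n f) show ?case by (rule H4_cong[OF H4.H4d[OF H4d.IH]]) (simp add: algebra_simps)
qed

lemma H4_mult: "H4 n f \<Longrightarrow> H4 m g \<Longrightarrow> H4 (n+m) (\<lambda>a b c d. f a b c d * g a b c d)"
proof (induction rule: H4.induct)
  case (H4c r) then show ?case using H4_scale[of m g r] by simp
next
  case (H4add n f h) then show ?case using H4.H4add[OF H4add.IH] by (simp add: distrib_right)
next
  case (H4a n f) show ?case by (rule H4_cong[OF H4_degeq[OF H4.H4a[OF H4a.IH[OF H4a.prems]]]]) (simp_all add: algebra_simps)
next
  case (H4b n f) show ?case by (rule H4_cong[OF H4_degeq[OF H4.H4b[OF H4b.IH[OF H4b.prems]]]]) (simp_all add: algebra_simps)
next
  case (H4cc n f) show ?case by (rule H4_cong[OF H4_degeq[OF H4.H4cc[OF H4cc.IH[OF H4cc.prems]]]]) (simp_all add: algebra_simps)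
next
  case (H4d n f) show ?case by (rule H4_cong[OF H4_degeq[OF H4.H4d[OF H4d.IH[OF H4d.prems]]]]) (simp_all add: algebra_simps)
qed




lemma H4_powa: "H4 n (\<lambda>a b c d. a ^ n)"
proof (induction n)
  case 0 show ?case using H4.H4c[of 1] by simp
next
  case (Suc n) show ?case using H4.H4a[OF Suc] by simp
qed

lemma H4_zero: "H4 n (\<lambda>a b c d. 0)"
  using H4_scale[OF H4_powa, of n 0] by simp

lemma H4_sum: "finite A \<Longrightarrow> (\<And>k. k \<in> A \<Longrightarrow> H4 n (F k)) \<Longrightarrow> H4 n (\<lambda>a b c d. \<Sum>k\<in>A. F k a b c d)"
  by (induction A rule: finite_induct) (auto intro: H4_zero H4.H4add)

lemma H4_sub: "H4 n f \<Longrightarrow> H4 n g \<Longrightarrow> H4 n (\<lambda>a b c d. f a b c d - g a b c d)"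
  using H4.H4add[OF _ H4_scale[of n g "-1"], of f] by simp

lemma H4_pow: "H4 1 f \<Longrightarrow> H4 k (\<lambda>a b c d. f a b c d ^ k)"
proof (induction k)
  case 0 then show ?case using H4.H4c[of 1] by simp
next
  case (Suc k)
  have "H4 (Suc k) (\<lambda>a b c d. f a b c d * f a b c d ^ k)"
    using H4_mult[OF Suc.prems Suc.IH[OF Suc.prems]] unfolding plus_1_eq_Suc .
  moreover have "\<And>a b c d. f a b c d * f a b c d ^ k = f a b c d ^ Suc k" by simp
  ultimately show ?case by (rule H4_cong)
qed



inductive H3 :: "nat \<Rightarrow> (real \<Rightarrow> real \<Rightarrow> real \<Rightarrow> real) \<Rightarrow> bool" where
  H3c: "H3 0 (\<lambda>a b c. r)"
| H3add: "H3 n f \<Longrightarrow> H3 n g \<Longrightarrow> H3 n (\<lambda>a b c. f a b c + g a b c)"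
| H3a: "H3 n f \<Longrightarrow> H3 (Suc n) (\<lambda>a b c. a * f a b c)"
| H3b: "H3 n f \<Longrightarrow> H3 (Suc n) (\<lambda>a b c. b * f a b c)"
| H3cc: "H3 n f \<Longrightarrow> H3 (Suc n) (\<lambda>a b c. c * f a b c)"

lemma H3_hpoly: "H3 n f \<Longrightarrow> \<exists>C. \<forall>a b c. f a b c = hpoly3 n C a b c"
proof (induction rule: H3.induct)
  case (H3c r) then show ?case by (intro exI[of _ "\<lambda>i j k. r"]) (simp add: hpoly3_0)
next
  case (H3add n f g) then obtain C1 C2 where "\<forall>a b c. f a b c = hpoly3 n C1 a b c"
    "\<forall>a b c. g a b c = hpoly3 n C2 a b c" by blast
  then show ?case by (intro exI[of _ "\<lambda>i j k. C1 i j k + C2 i j k"]) (simp add: hpoly3_add)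
next
  case (H3a n f) then obtain C where "\<forall>a b c. f a b c = hpoly3 n C a b c" by blast
  then show ?case by (intro exI[of _ "\<lambda>i j k. if i = 0 then 0 else C (i - 1) j k"]) (simp add: hpoly3_x)
next
  case (H3b n f) then obtain C where "\<forall>a b c. f a b c = hpoly3 n C a b c" by blast
  then show ?case by (intro exI[of _ "\<lambda>i j k. if j = 0 then 0 else C i (j - 1) k"]) (simp add: hpoly3_y)
next
  case (H3cc n f) then obtain C where "\<forall>a b c. f a b c = hpoly3 n C a b c" by blast
  then show ?case by (intro exI[of _ "\<lambda>i j k. if k = 0 then 0 else C i j (k - 1)"]) (simp add: hpoly3_z)
qed

lemma H3_cong: "H3 n f \<Longrightarrow> (\<And>a b c. f a b c = g a b c) \<Longrightarrow> H3 n g"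
proof -
  assume "H3 n f" "\<And>a b c. f a b c = g a b c"
  moreover have "f = g" using calculation(2) by (intro ext) 
  ultimately show ?thesis by simp
qed

lemma H3_degeq: "H3 n f \<Longrightarrow> n = m \<Longrightarrow> H3 m f" by blast

lemma H3_scale: "H3 n f \<Longrightarrow> H3 n (\<lambda>a b c. r * f a b c)"
proof (induction rule: H3.induct)
  case (H3c r') then show ?case using H3.H3c[of "r*r'"] by simp
next
  case (H3add n f g) then show ?case using H3.H3add[OF H3add.IH] by (simp add: distrib_left)
next
  case (H3a n f) show ?case by (rule H3_cong[OF H3.H3a[OF H3a.IH]]) (simp add: algebra_simps)
next
  case (H3b n f) show ?case by (rule H3_cong[OF H3.H3b[OF H3b.IH]]) (simp add: algebra_simps)
next
  case (H3cc n f) show ?case by (rule H3_cong[OF H3.H3cc[OF H3cc.IH]]) (simp add: algebra_simps)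
qed

lemma H3_mult: "H3 n f \<Longrightarrow> H3 m g \<Longrightarrow> H3 (n+m) (\<lambda>a b c. f a b c * g a b c)"
proof (induction rule: H3.induct)
  case (H3c r) then show ?case using H3_scale[of m g r] by simp
next
  case (H3add n f h) then show ?case using H3.H3add[OF H3add.IH] by (simp add: distrib_right)
next
  case (H3a n f) show ?case by (rule H3_cong[OF H3_degeq[OF H3.H3a[OF H3a.IH[OF H3a.prems]]]]) (simp_all add: algebra_simps)
next
  case (H3b n f) show ?case by (rule H3_cong[OF H3_degeq[OF H3.H3b[OF H3b.IH[OF H3b.prems]]]]) (simp_all add: algebra_simps)
next
  case (H3cc n f) show ?case by (rule H3_cong[OF H3_degeq[OF H3.H3cc[OF H3cc.IH[OF H3cc.prems]]]]) (simp_all add: algebra_simps)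
qed



lemma H3_powa: "H3 n (\<lambda>a b c. a ^ n)"
proof (induction n)
  case 0 show ?case using H3.H3c[of 1] by simp
next
  case (Suc n) show ?case using H3.H3a[OF Suc] by simp
qed

lemma H3_zero: "H3 n (\<lambda>a b c. 0)"
  using H3_scale[OF H3_powa, of n 0] by simp

lemma H3_sum: "finite A \<Longrightarrow> (\<And>k. k \<in> A \<Longrightarrow> H3 n (F k)) \<Longrightarrow> H3 n (\<lambda>a b c. \<Sum>k\<in>A. F k a b c)"
  by (induction A rule: finite_induct) (auto intro: H3_zero H3.H3add)

lemma H3_sub: "H3 n f \<Longrightarrow> H3 n g \<Longrightarrow> H3 n (\<lambda>a b c. f a b c - g a b c)"
  using H3.H3add[OF _ H3_scale[of n g "-1"], of f] by simp

lemma H3_pow: "H3 1 f \<Longrightarrow> H3 k (\<lambda>a b c. f a b c ^ k)"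
proof (induction k)
  case 0 then show ?case using H3.H3c[of 1] by simp
next
  case (Suc k)
  have "H3 (Suc k) (\<lambda>a b c. f a b c * f a b c ^ k)"
    using H3_mult[OF Suc.prems Suc.IH[OF Suc.prems]] unfolding plus_1_eq_Suc .
  moreover have "\<And>a b c. f a b c * f a b c ^ k = f a b c ^ Suc k" by simp
  ultimately show ?case by (rule H3_cong)
qed



definition P :: "nat \<Rightarrow> real \<Rightarrow> real \<Rightarrow> real" where
  "P n x y = (\<Sum>i<n. y^(n - Suc i) * x^i)"

definition g :: "nat \<Rightarrow> real \<Rightarrow> real \<Rightarrow> real" where
  "g n x y = (1/2) * (\<Sum>i<n. ((x+y)/2)^(n - Suc i) * P i x y)"

lemma P_diff: "x^n - y^n = (x - y) * P n x y"
  unfolding P_def by (rule power_diff_sumr2)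

lemma P_1: "P 1 x y = 1" unfolding P_def by simp

lemma g_1: "g 1 x y = 0" unfolding g_def P_def by simp

lemma g_id: "x^n + y^n - 2*((x+y)/2)^n = (x-y)^2 * g n x y"
proof -
  define m where "m = (x+y)/2"
  have 1: "x^n - m^n = (x-y)/2 * P n x m" using P_diff[of x n m] by (simp add: m_def field_simps)
  have 2: "y^n - m^n = -((x-y)/2) * P n y m" using P_diff[of y n m] by (simp add: m_def field_simps)
  have 3: "P n x m - P n y m = (x - y) * (\<Sum>i<n. m^(n - Suc i) * P i x y)"
    unfolding P_def[of n x m] P_def[of n y m] sum_subtractf[symmetric] sum_distrib_left
  proof (rule sum.cong)
    fix i assume "i \<in> {..<n}"
    have "x^i - y^i = (x-y) * P i x y" by (rule P_diff)
    then show "m ^ (n - Suc i) * x ^ i - m ^ (n - Suc i) * y ^ i = (x - y) * (m ^ (n - Suc i) * P i x y)"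
      by (metis mult.left_commute right_diff_distrib)
  qed simp
  have "x^n + y^n - 2*m^n = (x^n - m^n) + (y^n - m^n)" by simp
  also have "\<dots> = (x-y)/2 * (P n x m - P n y m)" unfolding 1 2 by (simp add: algebra_simps)
  also have "\<dots> = (x-y)^2 * g n x y" unfolding 3 g_def m_def[symmetric] by (simp add: power2_eq_square)
  finally show ?thesis unfolding m_def .
qed

definition rr :: "nat \<Rightarrow> nat \<Rightarrow> real \<Rightarrow> real \<Rightarrow> real \<Rightarrow> real \<Rightarrow> real" where
  "rr n1 n2 a b c d = (a-b) * g n1 a b * P n2 ((c+d)/2) d / 2 + (c-d) * g n2 c d * P n1 ((a+b)/2) b / 2
     + (P n1 a ((a+b)/2) * P n2 c ((c+d)/2) + P n1 b ((a+b)/2) * P n2 d ((c+d)/2)) / 4"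

lemma main_id:
  "a ^ n1 * c ^ n2 + b ^ n1 * d ^ n2 - 2 * ((a + b) / 2) ^ n1 * ((c + d) / 2) ^ n2
   = (a-b)^2 * (d^n2 * g n1 a b) + (c-d)^2 * (b^n1 * g n2 c d) + (a-b)*(c-d) * rr n1 n2 a b c d"
proof -
  define ma where "ma = (a+b)/2"
  define mc where "mc = (c+d)/2"
  have A: "a^n1 - ma^n1 = (a-b)/2 * P n1 a ma" using P_diff[of a n1 ma] by (simp add: ma_def field_simps)
  have B: "b^n1 - ma^n1 = -((a-b)/2) * P n1 b ma" using P_diff[of b n1 ma] by (simp add: ma_def field_simps)
  have C: "c^n2 - mc^n2 = (c-d)/2 * P n2 c mc" using P_diff[of c n2 mc] by (simp add: mc_def field_simps)
  have D: "d^n2 - mc^n2 = -((c-d)/2) * P n2 d mc" using P_diff[of d n2 mc] by (simp add: mc_def field_simps)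
  have E: "mc^n2 = d^n2 + (c-d)/2 * P n2 mc d" using P_diff[of mc n2 d] by (simp add: mc_def field_simps)
  have G: "ma^n1 = b^n1 + (a-b)/2 * P n1 ma b" using P_diff[of ma n1 b] by (simp add: ma_def field_simps)
  have Sa: "a^n1 + b^n1 - 2*ma^n1 = (a-b)^2 * g n1 a b" using g_id unfolding ma_def .
  have Sc: "c^n2 + d^n2 - 2*mc^n2 = (c-d)^2 * g n2 c d" using g_id unfolding mc_def .
  have key: "a ^ n1 * c ^ n2 + b ^ n1 * d ^ n2 - 2 * ma ^ n1 * mc ^ n2
     = (a^n1 + b^n1 - 2*ma^n1) * mc^n2 + ma^n1 * (c^n2 + d^n2 - 2*mc^n2)
       + (a^n1 - ma^n1)*(c^n2 - mc^n2) + (b^n1 - ma^n1)*(d^n2 - mc^n2)"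
    by (simp add: algebra_simps)
  show ?thesis
    unfolding ma_def[symmetric] mc_def[symmetric] key Sa Sc A B C D
    apply (subst E) apply (subst G)
    unfolding rr_def ma_def[symmetric] mc_def[symmetric]
    by (simp add: field_simps power2_eq_square)
qed


lemma H4_var_a: "H4 1 (\<lambda>a b c d. a)" using H4.H4a[OF H4.H4c[of 1]] by simp
lemma H4_var_b: "H4 1 (\<lambda>a b c d. b)" using H4.H4b[OF H4.H4c[of 1]] by simp
lemma H4_var_c: "H4 1 (\<lambda>a b c d. c)" using H4.H4cc[OF H4.H4c[of 1]] by simp
lemma H4_var_d: "H4 1 (\<lambda>a b c d. d)" using H4.H4d[OF H4.H4c[of 1]] by simp
lemma H3_var_a: "H3 1 (\<lambda>a b c. a)" using H3.H3a[OF H3.H3c[of 1]] by simp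
lemma H3_var_b: "H3 1 (\<lambda>a b c. b)" using H3.H3b[OF H3.H3c[of 1]] by simp
lemma H3_var_c: "H3 1 (\<lambda>a b c. c)" using H3.H3cc[OF H3.H3c[of 1]] by simp

lemma H4_mid: "H4 1 X \<Longrightarrow> H4 1 Y \<Longrightarrow> H4 1 (\<lambda>a b c d. (X a b c d + Y a b c d) / 2)"
  by (rule H4_cong[OF H4_scale[OF H4.H4add], of 1 X Y "1/2"]) auto
lemma H3_mid: "H3 1 X \<Longrightarrow> H3 1 Y \<Longrightarrow> H3 1 (\<lambda>a b c. (X a b c + Y a b c) / 2)"
  by (rule H3_cong[OF H3_scale[OF H3.H3add], of 1 X Y "1/2"]) auto

lemma H4_P: assumes "H4 1 X" "H4 1 Y" shows "H4 (n - 1) (\<lambda>a b c d. P n (X a b c d) (Y a b c d))"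
  unfolding P_def
proof (rule H4_sum)
  fix i assume i: "i \<in> {..<n}"
  show "H4 (n - 1) (\<lambda>a b c d. Y a b c d ^ (n - Suc i) * X a b c d ^ i)"
    by (rule H4_degeq[OF H4_mult[OF H4_pow[OF assms(2)] H4_pow[OF assms(1)]]]) (use i in auto)
qed simp

lemma H3_P: assumes "H3 1 X" "H3 1 Y" shows "H3 (n - 1) (\<lambda>a b c. P n (X a b c) (Y a b c))"
  unfolding P_def
proof (rule H3_sum)
  fix i assume i: "i \<in> {..<n}"
  show "H3 (n - 1) (\<lambda>a b c. Y a b c ^ (n - Suc i) * X a b c ^ i)"
    by (rule H3_degeq[OF H3_mult[OF H3_pow[OF assms(2)] H3_pow[OF assms(1)]]]) (use i in auto)
qed simp

lemma H4_g: assumes X: "H4 1 X" and Y: "H4 1 Y" shows "H4 (n - 2) (\<lambda>a b c d. g n (X a b c d) (Y a b c d))"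
  unfolding g_def
proof (rule H4_scale[OF H4_sum])
  fix i assume i: "i \<in> {..<n}"
  show "H4 (n - 2) (\<lambda>a b c d. ((X a b c d + Y a b c d) / 2) ^ (n - Suc i) * P i (X a b c d) (Y a b c d))"
  proof (cases "i = 0")
    case True then show ?thesis by (rule_tac H4_cong[OF H4_zero]) (simp add: P_def)
  next
    case False
    show ?thesis
      by (rule H4_degeq[OF H4_mult[OF H4_pow[OF H4_mid[OF X Y]] H4_P[OF X Y]]]) (use i False in auto)
  qed
qed simp

lemma H3_g: assumes X: "H3 1 X" and Y: "H3 1 Y" shows "H3 (n - 2) (\<lambda>a b c. g n (X a b c) (Y a b c))"
  unfolding g_def
proof (rule H3_scale[OF H3_sum])
  fix i assume i: "i \<in> {..<n}"
  show "H3 (n - 2) (\<lambda>a b c. ((X a b c + Y a b c) / 2) ^ (n - Suc i) * P i (X a b c) (Y a b c))"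
  proof (cases "i = 0")
    case True then show ?thesis by (rule_tac H3_cong[OF H3_zero]) (simp add: P_def)
  next
    case False
    show ?thesis
      by (rule H3_degeq[OF H3_mult[OF H3_pow[OF H3_mid[OF X Y]] H3_P[OF X Y]]]) (use i False in auto)
  qed
qed simp

lemma Q_ex: assumes "n1 \<ge> 1" "n2 \<ge> 1"
  shows "\<exists>C. \<forall>x y z. hpoly3 (n1 + n2 - 2) C x y z = z ^ n2 * g n1 x y"
proof -
  have "H3 (n1 + n2 - 2) (\<lambda>x y z. z ^ n2 * g n1 x y)"
  proof (cases "n1 = 1")
    case True then show ?thesis by (rule_tac H3_cong[OF H3_zero]) (simp add: g_def P_def)
  next
    case False
    show ?thesis
      by (rule H3_degeq[OF H3_mult[OF H3_pow[OF H3_var_c] H3_g[OF H3_var_a H3_var_b]]]) (use assms False in auto)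
  qed
  from H3_hpoly[OF this] show ?thesis by metis
qed

lemma R_ex: assumes "n1 \<ge> 1" "n2 \<ge> 1"
  shows "\<exists>C. \<forall>a b c d. hpoly4 (n1 + n2 - 2) C a b c d = rr n1 n2 a b c d"
proof -
  have ab: "H4 1 (\<lambda>a b c d. a - b)" by (rule H4_sub[OF H4_var_a H4_var_b])
  have cd: "H4 1 (\<lambda>a b c d. c - d)" by (rule H4_sub[OF H4_var_c H4_var_d])
  have ma: "H4 1 (\<lambda>a b c d. (a + b) / 2)" by (rule H4_mid[OF H4_var_a H4_var_b])
  have mc: "H4 1 (\<lambda>a b c d. (c + d) / 2)" by (rule H4_mid[OF H4_var_c H4_var_d])
  have T1: "H4 (n1 + n2 - 2) (\<lambda>a b c d. (1/2) * ((a - b) * g n1 a b * P n2 ((c+d)/2) d))"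
  proof (cases "n1 = 1")
    case True then show ?thesis by (rule_tac H4_cong[OF H4_zero]) (simp add: g_def P_def)
  next
    case False
    show ?thesis
      by (rule H4_scale[OF H4_degeq[OF H4_mult[OF H4_mult[OF ab H4_g[OF H4_var_a H4_var_b]] H4_P[OF mc H4_var_d]]]])
         (use assms False in auto)
  qed
  have T2: "H4 (n1 + n2 - 2) (\<lambda>a b c d. (1/2) * ((c - d) * g n2 c d * P n1 ((a+b)/2) b))"
  proof (cases "n2 = 1")
    case True then show ?thesis by (rule_tac H4_cong[OF H4_zero]) (simp add: g_def P_def)
  next
    case False
    show ?thesis
      by (rule H4_scale[OF H4_degeq[OF H4_mult[OF H4_mult[OF cd H4_g[OF H4_var_c H4_var_d]] H4_P[OF ma H4_var_b]]]])
         (use assms False in auto)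
  qed
  have T3: "H4 (n1 + n2 - 2) (\<lambda>a b c d. (1/4) * (P n1 a ((a+b)/2) * P n2 c ((c+d)/2) + P n1 b ((a+b)/2) * P n2 d ((c+d)/2)))"
    by (rule H4_scale[OF H4_degeq[OF H4.H4add[OF H4_mult[OF H4_P[OF H4_var_a ma] H4_P[OF H4_var_c mc]]
                                         H4_mult[OF H4_P[OF H4_var_b ma] H4_P[OF H4_var_d mc]]]]])
       (use assms in auto)
  have "H4 (n1 + n2 - 2) (\<lambda>a b c d. rr n1 n2 a b c d)"
    by (rule H4_cong[OF H4.H4add[OF H4.H4add[OF T1 T2] T3]]) (simp add: rr_def)
  from H4_hpoly[OF this] show ?thesis by metis
qed

theorem lemmaA5:
  shows "\<exists>(Q :: nat \<Rightarrow> nat \<Rightarrow> nat \<Rightarrow> nat \<Rightarrow> nat \<Rightarrow> real)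
           (R :: nat \<Rightarrow> nat \<Rightarrow> nat \<Rightarrow> nat \<Rightarrow> nat \<Rightarrow> nat \<Rightarrow> real).
     (\<forall>n1 n2 (a::real) b c d. n1 \<ge> 1 \<longrightarrow> n2 \<ge> 1 \<longrightarrow>
        a ^ n1 * c ^ n2 + b ^ n1 * d ^ n2 - 2 * ((a + b) / 2) ^ n1 * ((c + d) / 2) ^ n2
        = (a - b)^2 * hpoly3 (n1 + n2 - 2) (Q n1 n2) a b d
          + (c - d)^2 * hpoly3 (n1 + n2 - 2) (Q n2 n1) c d b
          + (a - b) * (c - d) * hpoly4 (n1 + n2 - 2) (R n1 n2) a b c d)
     \<and> (\<forall>a b d. hpoly3 0 (Q 1 1) a b d = 0)
     \<and> (\<forall>a b c d. hpoly4 0 (R 1 1) a b c d = 1 / 2)"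
proof -
  define Q where "Q n1 n2 = (SOME C. \<forall>x y z. hpoly3 (n1 + n2 - 2) C x y z = z ^ n2 * g n1 x y)" for n1 n2
  define R where "R n1 n2 = (SOME C. \<forall>a b c d. hpoly4 (n1 + n2 - 2) C a b c d = rr n1 n2 a b c d)" for n1 n2
  have Q: "hpoly3 (n1 + n2 - 2) (Q n1 n2) x y z = z ^ n2 * g n1 x y" if "n1 \<ge> 1" "n2 \<ge> 1" for n1 n2 x y z
    using someI_ex[OF Q_ex[OF that]] unfolding Q_def by blast
  have R: "hpoly4 (n1 + n2 - 2) (R n1 n2) a b c d = rr n1 n2 a b c d" if "n1 \<ge> 1" "n2 \<ge> 1" for n1 n2 a b c d
    using someI_ex[OF R_ex[OF that]] unfolding R_def by blast
  show ?thesis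
  proof (intro exI conjI allI impI)
    fix n1 n2 :: nat and a b c d :: real assume h: "n1 \<ge> 1" "n2 \<ge> 1"
    have Q2: "hpoly3 (n1 + n2 - 2) (Q n2 n1) c d b = b ^ n1 * g n2 c d"
      using Q[OF h(2) h(1), of c d b] by (simp add: add.commute)
    show "a ^ n1 * c ^ n2 + b ^ n1 * d ^ n2 - 2 * ((a + b) / 2) ^ n1 * ((c + d) / 2) ^ n2
        = (a - b)^2 * hpoly3 (n1 + n2 - 2) (Q n1 n2) a b d
          + (c - d)^2 * hpoly3 (n1 + n2 - 2) (Q n2 n1) c d b
          + (a - b) * (c - d) * hpoly4 (n1 + n2 - 2) (R n1 n2) a b c d"
      unfolding main_id Q[OF h] R[OF h] Q2 ..
  next
    fix a b d :: real show "hpoly3 0 (Q 1 1) a b d = 0" using Q[of 1 1 a b d] by (simp add: g_def P_def)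
  next
    fix a b c d :: real show "hpoly4 0 (R 1 1) a b c d = 1 / 2" using R[of 1 1 a b c d] by (simp add: rr_def g_def P_def)
  qed
qed

end
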